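(* Let $n=m+s$ and consider the system $$\begin{bmatrix}\dot x_a\\ \dot x_u\end{bmatrix}=[J(x)-R(x)]\begin{bmatrix}\nabla_{x_a}\mathcal H(x)\\ \nabla_{x_u}\mathcal H(x)\end{bmatrix}+\begin{bmatrix}u-d_a(x)\\ -d_u(x)\end{bmatrix},$$ with $x=\operatorname{col}(x_a,x_u)$, $x_a\in\mathbb R^m$, $x_u\in\mathbb R^s$, $u\in\mathbb R^m$, smooth $\mathcal H:\mathbb R^n\to\mathbb R_+$, and $J=\begin{bmatrix}J_{aa}&J_{au}\\-J_{au}^\top&J_{uu}\end{bmatrix}=-J^\top$, $R=\begin{bmatrix}R_{aa}&R_{au}\\R_{au}^\top&R_{uu}\end{bmatrix}=R^\top\ge0$ (possibly state-dependent). Assume: $d_a(x)=G_d(x)\bar d_a$ with $\bar d_a\in\mathbb R^m$ constant and $G_d:\mathbb R^n\to\mathbb R^{m\times m}$ full rank with $G_d<0$; $d_u(x)=(J_{au}(x)+R_{au}(x))^\top\bar d_u$ with $\bar d_u\in\mathbb R^m$ constant; and there exists an isolated $\bar x=(\bar x_a,\bar x_u)$ with $\bar x=\arg\min\mathbf H(x)$, where $\mathbf H(x):=\mathcal H(x)+x_a^\top\bar d_u$. Let $K_i\in\mathbb R^{m\times m}$ be symmetric positive definite, choose $J_{c_1}=\tfrac12(G_d-G_d^\top)$, $R_{c_1}=-\tfrac12(G_d+G_d^\top)$, and close the loop with $$u=[-J_{aa}+R_{aa}+J_{c_1}-R_{c_1}]\nabla_{x_a}\mathcal H+[J_{c_1}-R_{c_1}]K_i(x_a-x_c)+2R_{au}\nabla_{x_u}\mathcal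 H,$$ $$\dot x_c=(J_{au}+R_{au})\nabla_{x_u}\mathcal H,\qquad x_c\in\mathbb R^m$$ (the controller with $R_{c_2}=0_{m\times m}$), written in the coordinates $w=(w_a,w_u,w_c)=(x_a,x_u,x_a-x_c)$. Then: (i) $\bar w=(\bar x_a,\bar x_u,K_i^{-1}[\bar d_a+\bar d_u])$ is a stable equilibrium of the closed-loop system; (ii) if the signal $Y_u:=\nabla_{w_a}\mathbf H(w_a,w_u)+K_i(w_c-\bar w_c)$, with $\bar w_c=K_i^{-1}[\bar d_a+\bar d_u]$, is a detectable output, the equilibrium is asymptotically stable; (iii) the stability properties are global if $\mathbf H$ is radially unbounded.
   Context: $\nabla$ denotes the transposed gradient and $\nabla_{x_a},\nabla_{x_u},\nabla_{w_a}$ transposed partial gradients. $G_d<0$ means negative definite. "Detectable output" means that closed-loop solutions along which the output is identically zero converge to the equilibrium. All functions are smooth. *)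

theory Defs
  imports "HOL-Analysis.Analysis"
begin

text \<open>C^0 = continuous; C^(k+1) = differentiable everywhere and every directional
  derivative x |-> Df(x) v is C^k. In finite dimensions this is the usual C^k.\<close>
fun Ck :: "nat \<Rightarrow> ('a::real_normed_vector \<Rightarrow> 'b::real_normed_vector) \<Rightarrow> bool" where
  "Ck 0 f = continuous_on UNIV f"
| "Ck (Suc k) f = ((\<forall>x. f differentiable (at x)) \<and>
                   (\<forall>v. Ck k (\<lambda>x. frechet_derivative f (at x) v)))"

definition smooth :: "('a::real_normed_vector \<Rightarrow> 'b::real_normed_vector) \<Rightarrow> bool" where
  "smooth f \<longleftrightarrow> (\<forall>k. Ck k f)"

definition grad :: "('a::real_inner \<Rightarrow> real) \<Rightarrow> 'a \<Rightarrow> 'a" where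
  "grad f x = (THE g. GDERIV f x :> g)"

definition grad_a :: "((real^'m) \<times> (real^'s) \<Rightarrow> real) \<Rightarrow> (real^'m) \<times> (real^'s) \<Rightarrow> real^'m" where
  "grad_a f x = fst (grad f x)"
definition grad_u :: "((real^'m) \<times> (real^'s) \<Rightarrow> real) \<Rightarrow> (real^'m) \<times> (real^'s) \<Rightarrow> real^'s" where
  "grad_u f x = snd (grad f x)"

definition neg_def :: "real^'m^'m \<Rightarrow> bool" where
  "neg_def A \<longleftrightarrow> (\<forall>v. v \<noteq> 0 \<longrightarrow> v \<bullet> (A *v v) < 0)"

definition pos_def :: "real^'m^'m \<Rightarrow> bool" where
  "pos_def A \<longleftrightarrow> (\<forall>v. v \<noteq> 0 \<longrightarrow> v \<bullet> (A *v v) > 0)"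

definition block_psd :: "real^'m^'m \<Rightarrow> real^'s^'m \<Rightarrow> real^'s^'s \<Rightarrow> bool" where
  "block_psd Raa Rau Ruu \<longleftrightarrow>
     (\<forall>va vu. va \<bullet> (Raa *v va) + va \<bullet> (Rau *v vu) + vu \<bullet> (transpose Rau *v va)
              + vu \<bullet> (Ruu *v vu) \<ge> 0)"

type_synonym ('m,'s) st = "(real^'m) \<times> (real^'s)"

text \<open>Plant: xdot = [J - R] grad H + col(u - d_a(x), - d_u(x)), with
  J = [Jaa Jau; -Jau^T Juu], R = [Raa Rau; Rau^T Ruu],
  d_a(x) = Gd(x) da_bar, d_u(x) = (Jau(x) + Rau(x))^T du_bar.\<close>
definition plant ::
  "(('m,'s) st \<Rightarrow> real^'m^'m) \<Rightarrow> (('m,'s) st \<Rightarrow> real^'s^'m) \<Rightarrow> (('m,'s) st \<Rightarrow> real^'s^'s) \<Rightarrow>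
   (('m,'s) st \<Rightarrow> real^'m^'m) \<Rightarrow> (('m,'s) st \<Rightarrow> real^'s^'m) \<Rightarrow> (('m,'s) st \<Rightarrow> real^'s^'s) \<Rightarrow>
   (('m,'s) st \<Rightarrow> real^'m^'m) \<Rightarrow> real^'m \<Rightarrow> real^'m \<Rightarrow> (('m,'s) st \<Rightarrow> real) \<Rightarrow>
   ('m,'s) st \<Rightarrow> real^'m \<Rightarrow> ('m,'s) st" where
  "plant Jaa Jau Juu Raa Rau Ruu Gd da du H x u =
     (let ga = grad_a H x; gu = grad_u H x in
      ((Jaa x - Raa x) *v ga + (Jau x - Rau x) *v gu + u - Gd x *v da,
       (- transpose (Jau x) - transpose (Rau x)) *v ga + (Juu x - Ruu x) *v gu
         - transpose (Jau x + Rau x) *v du))"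

definition Jc1 :: "real^'m^'m \<Rightarrow> real^'m^'m" where
  "Jc1 G = (1/2) *\<^sub>R (G - transpose G)"
definition Rc1 :: "real^'m^'m \<Rightarrow> real^'m^'m" where
  "Rc1 G = - (1/2) *\<^sub>R (G + transpose G)"

definition ctrl ::
  "(('m,'s) st \<Rightarrow> real^'m^'m) \<Rightarrow> (('m,'s) st \<Rightarrow> real^'m^'m) \<Rightarrow> (('m,'s) st \<Rightarrow> real^'s^'m) \<Rightarrow>
   (('m,'s) st \<Rightarrow> real^'m^'m) \<Rightarrow> real^'m^'m \<Rightarrow> (('m,'s) st \<Rightarrow> real) \<Rightarrow>
   ('m,'s) st \<Rightarrow> real^'m \<Rightarrow> real^'m" where
  "ctrl Jaa Raa Rau Gd Ki H x xc =
     (- Jaa x + Raa x + Jc1 (Gd x) - Rc1 (Gd x)) *v grad_a H x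
     + (Jc1 (Gd x) - Rc1 (Gd x)) *v (Ki *v (fst x - xc))
     + 2 *\<^sub>R (Rau x *v grad_u H x)"

definition ctrl_dyn ::
  "(('m,'s) st \<Rightarrow> real^'s^'m) \<Rightarrow> (('m,'s) st \<Rightarrow> real^'s^'m) \<Rightarrow> (('m,'s) st \<Rightarrow> real) \<Rightarrow>
   ('m,'s) st \<Rightarrow> real^'m" where
  "ctrl_dyn Jau Rau H x = (Jau x + Rau x) *v grad_u H x"

text \<open>Closed loop in the coordinates w = (w_a, w_u, w_c) = (x_a, x_u, x_a - x_c).\<close>
definition closed_loop_w ::
  "(('m,'s) st \<Rightarrow> real^'m^'m) \<Rightarrow> (('m,'s) st \<Rightarrow> real^'s^'m) \<Rightarrow> (('m,'s) st \<Rightarrow> real^'s^'s) \<Rightarrow>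
   (('m,'s) st \<Rightarrow> real^'m^'m) \<Rightarrow> (('m,'s) st \<Rightarrow> real^'s^'m) \<Rightarrow> (('m,'s) st \<Rightarrow> real^'s^'s) \<Rightarrow>
   (('m,'s) st \<Rightarrow> real^'m^'m) \<Rightarrow> real^'m \<Rightarrow> real^'m \<Rightarrow> real^'m^'m \<Rightarrow> (('m,'s) st \<Rightarrow> real) \<Rightarrow>
   (real^'m) \<times> (real^'s) \<times> (real^'m) \<Rightarrow> (real^'m) \<times> (real^'s) \<times> (real^'m)" where
  "closed_loop_w Jaa Jau Juu Raa Rau Ruu Gd da du Ki H w =
     (let x = (fst w, fst (snd w)); xc = fst w - snd (snd w);
          xdot = plant Jaa Jau Juu Raa Rau Ruu Gd da du H x (ctrl Jaa Raa Rau Gd Ki H x xc);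
          xcdot = ctrl_dyn Jau Rau H x
      in (fst xdot, snd xdot, fst xdot - xcdot))"

definition solution_on :: "('a::real_normed_vector \<Rightarrow> 'a) \<Rightarrow> (real \<Rightarrow> 'a) \<Rightarrow> real set \<Rightarrow> bool" where
  "solution_on F y I \<longleftrightarrow> (\<forall>t\<in>I. (y has_vector_derivative F (y t)) (at t within I))"

definition lyap_stable :: "('a::real_normed_vector \<Rightarrow> 'a) \<Rightarrow> 'a \<Rightarrow> bool" where
  "lyap_stable F e \<longleftrightarrow> F e = 0 \<and>
     (\<forall>\<epsilon>>0. \<exists>\<delta>>0. \<forall>y T. solution_on F y {0..T} \<longrightarrow> dist (y 0) e < \<delta> \<longrightarrow>
        (\<forall>t\<in>{0..T}. dist (y t) e < \<epsilon>))"

definition asym_stable :: "('a::real_normed_vector \<Rightarrow> 'a) \<Rightarrow> 'a \<Rightarrow> bool" where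
  "asym_stable F e \<longleftrightarrow> lyap_stable F e \<and>
     (\<exists>\<delta>>0. \<forall>y. solution_on F y {0..} \<longrightarrow> dist (y 0) e < \<delta> \<longrightarrow> (y \<longlongrightarrow> e) at_top)"

definition glob_stable :: "('a::real_normed_vector \<Rightarrow> 'a) \<Rightarrow> 'a \<Rightarrow> bool" where
  "glob_stable F e \<longleftrightarrow> lyap_stable F e \<and>
     (\<forall>r. \<exists>B. \<forall>y T. solution_on F y {0..T} \<longrightarrow> dist (y 0) e < r \<longrightarrow>
        (\<forall>t\<in>{0..T}. dist (y t) e < B))"

definition glob_asym_stable :: "('a::real_normed_vector \<Rightarrow> 'a) \<Rightarrow> 'a \<Rightarrow> bool" where
  "glob_asym_stable F e \<longleftrightarrow> lyap_stable F e \<and>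
     (\<forall>y. solution_on F y {0..} \<longrightarrow> (y \<longlongrightarrow> e) at_top)"

definition detectable :: "('a::real_normed_vector \<Rightarrow> 'a) \<Rightarrow> ('a \<Rightarrow> 'b::zero) \<Rightarrow> 'a \<Rightarrow> bool" where
  "detectable F Y e \<longleftrightarrow>
     (\<forall>y. solution_on F y {0..} \<longrightarrow> (\<forall>t\<ge>0. Y (y t) = 0) \<longrightarrow> (y \<longlongrightarrow> e) at_top)"

definition radially_unbounded :: "('a::real_normed_vector \<Rightarrow> real) \<Rightarrow> bool" where
  "radially_unbounded f \<longleftrightarrow> filterlim f at_top at_infinity"

end

theory Submission
  imports Defs "HOL-Complex_Analysis.Great_Picard"
begin


lemma vec_bound:
  fixes g :: "real \<Rightarrow> 'a::real_normed_vector"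
  assumes "convex S" "\<And>x. x \<in> S \<Longrightarrow> (g has_vector_derivative g' x) (at x within S)"
    "\<And>x. x \<in> S \<Longrightarrow> norm (g' x) \<le> B" "x \<in> S" "y \<in> S"
  shows "norm (g x - g y) \<le> B * \<bar>x - y\<bar>"
proof -
  have "norm (g x - g y) \<le> B * norm (x - y)"
  proof (rule differentiable_bound[OF assms(1) _ _ assms(4,5)])
    fix z assume z: "z \<in> S"
    show "(g has_derivative (\<lambda>h. h *\<^sub>R g' z)) (at z within S)"
      using assms(2)[OF z] by (simp add: has_vector_derivative_def)
    have "onorm (\<lambda>h. h *\<^sub>R g' z) \<le> onorm (\<lambda>h::real. h) * norm (g' z)"
      by (rule onorm_scaleR_left_lemma) simp
    also have "\<dots> \<le> 1 * norm (g' z)"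
      by (intro mult_right_mono onorm_id_le) simp
    finally show "onorm (\<lambda>h. h *\<^sub>R g' z) \<le> B" using assms(3)[OF z] by simp
  qed
  then show ?thesis by simp
qed

lemma sol_cont: "solution_on F y I \<Longrightarrow> continuous_on I y"
  unfolding solution_on_def continuous_on_eq_continuous_within
  using has_vector_derivative_continuous by blast

lemma sol_subset: "solution_on F y I \<Longrightarrow> J \<subseteq> I \<Longrightarrow> solution_on F y J"
  unfolding solution_on_def using has_vector_derivative_within_subset by blast

lemma sol_shift:
  assumes sol: "solution_on F y {0..}" and c: "c \<ge> 0"
  shows "solution_on F (\<lambda>t. y (c + t)) {0..}"
  unfolding solution_on_def
proof
  fix t :: real assume t: "t \<in> {0..}"
  have "(y has_vector_derivative F (y (c + t))) (at (c + t) within {0..})"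
    using sol t c unfolding solution_on_def by auto
  then have d1: "(y has_vector_derivative F (y (c + t))) (at (c + t) within (\<lambda>t. c + t) ` {0..})"
    by (rule has_vector_derivative_within_subset) (use c in auto)
  have d0: "((\<lambda>t. c + t) has_vector_derivative 1) (at t within {0..})"
    by (auto intro!: derivative_eq_intros)
  from vector_diff_chain_within[OF d0 d1]
  show "((\<lambda>t. y (c + t)) has_vector_derivative F (y (c + t))) (at t within {0..})"
    by (simp add: o_def)
qed

lemma V_deriv:
  assumes Vd: "\<And>w. (V has_derivative (\<lambda>h. DV w \<bullet> h)) (at w)"
    and yd: "(y has_vector_derivative F (y t)) (at t within I)"
  shows "((\<lambda>t. V (y t)) has_real_derivative (DV (y t) \<bullet> F (y t))) (at t within I)"
proof -
  have "((\<lambda>t. V (y t)) has_derivative (\<lambda>h. DV (y t) \<bullet> (h *\<^sub>R F (y t)))) (at t within I)"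
    by (rule has_derivative_compose[OF yd[unfolded has_vector_derivative_def] Vd])
  moreover have "(\<lambda>h. DV (y t) \<bullet> (h *\<^sub>R F (y t))) = (*) (DV (y t) \<bullet> F (y t))"
    by (rule ext) (simp add: mult.commute)
  ultimately show ?thesis by (simp add: has_field_derivative_def)
qed

lemma V_descent:
  assumes Vd: "\<And>w. (V has_derivative (\<lambda>h. DV w \<bullet> h)) (at w)"
    and Wn: "\<And>w. DV w \<bullet> F w \<le> 0"
    and sol: "solution_on F y I" and I: "is_interval I" and st: "s \<in> I" "t \<in> I" "s \<le> t"
  shows "V (y t) \<le> V (y s)"
proof (cases "s = t")
  case True then show ?thesis by simp
next
  case False
  with st have lt: "s < t" by simp
  have sub: "{s..t} \<subseteq> I"
  proof
    fix x assume "x \<in> {s..t}"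
    then show "x \<in> I" using mem_is_interval_1_I[OF I st(1,2)] by simp
  qed
  have D: "\<And>\<tau>. \<tau> \<in> I \<Longrightarrow> ((\<lambda>t. V (y t)) has_real_derivative (DV (y \<tau>) \<bullet> F (y \<tau>))) (at \<tau> within I)"
  proof -
    fix \<tau> assume "\<tau> \<in> I"
    then have "(y has_vector_derivative F (y \<tau>)) (at \<tau> within I)"
      using sol unfolding solution_on_def by blast
    then show "((\<lambda>t. V (y t)) has_real_derivative (DV (y \<tau>) \<bullet> F (y \<tau>))) (at \<tau> within I)"
      by (rule V_deriv[OF Vd])
  qed
  have cont: "continuous_on {s..t} (\<lambda>t. V (y t))"
    unfolding continuous_on_eq_continuous_within
  proof
    fix x assume x: "x \<in> {s..t}"
    then have "x \<in> I" using sub by blast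
    then have "continuous (at x within I) (\<lambda>t. V (y t))" by (rule DERIV_continuous[OF D])
    then show "continuous (at x within {s..t}) (\<lambda>t. V (y t))"
      by (rule continuous_within_subset[OF _ sub])
  qed
  have Dat: "\<And>x. s < x \<Longrightarrow> x < t \<Longrightarrow> ((\<lambda>t. V (y t)) has_real_derivative (DV (y x) \<bullet> F (y x))) (at x)"
  proof -
    fix x assume "s < x" "x < t"
    then have "x \<in> I" using sub by auto
    have "((\<lambda>t. V (y t)) has_real_derivative (DV (y x) \<bullet> F (y x))) (at x within {s..t})"
      by (rule DERIV_subset[OF D[OF \<open>x \<in> I\<close>] sub])
    then show "((\<lambda>t. V (y t)) has_real_derivative (DV (y x) \<bullet> F (y x))) (at x)"
      using at_within_Icc_at[OF \<open>s < x\<close> \<open>x < t\<close>] by simp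
  qed
  have dif: "(\<lambda>t. V (y t)) differentiable (at x)" if "s < x" "x < t" for x
    unfolding real_differentiable_def using Dat[OF that] by (rule exI)
  obtain l z where z: "s < z" "z < t" "DERIV (\<lambda>t. V (y t)) z :> l" "V (y t) - V (y s) = (t - s) * l"
    using MVT[OF lt cont dif] by blast
  have "l = DV (y z) \<bullet> F (y z)" using DERIV_unique[OF z(3) Dat[OF z(1,2)]] .
  then have "l \<le> 0" using Wn by simp
  then have "(t - s) * l \<le> 0" using lt by (simp add: mult_nonneg_nonpos)
  then show ?thesis using z(4) by linarith
qed


lemma V_cont:
  assumes Vd: "\<And>w. (V has_derivative (\<lambda>h. DV w \<bullet> h)) (at w)"
  shows "continuous_on S V"
proof -
  have "\<And>w. isCont V w" using has_derivative_continuous[OF Vd] by blast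
  then show ?thesis by (simp add: continuous_at_imp_continuous_on)
qed

lemma lyap:
  fixes F :: "'a::euclidean_space \<Rightarrow> 'a"
  assumes Fe: "F e = 0"
    and Vd: "\<And>w. (V has_derivative (\<lambda>h. DV w \<bullet> h)) (at w)"
    and Wn: "\<And>w. DV w \<bullet> F w \<le> 0"
    and V0: "V e = 0"
    and Vpos: "\<exists>r>0. \<forall>x. x \<noteq> e \<longrightarrow> dist x e < r \<longrightarrow> V x > 0"
  shows "lyap_stable F e"
  unfolding lyap_stable_def
proof (intro conjI allI impI)
  show "F e = 0" by (rule Fe)
  fix \<epsilon> :: real assume "\<epsilon> > 0"
  obtain r where r: "r > 0" "\<And>x. x \<noteq> e \<Longrightarrow> dist x e < r \<Longrightarrow> V x > 0" using Vpos by blast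
  define \<epsilon>' where "\<epsilon>' = min \<epsilon> r / 2"
  have e': "\<epsilon>' > 0" "\<epsilon>' < \<epsilon>" "\<epsilon>' < r" using r(1) \<open>\<epsilon> > 0\<close> by (auto simp: \<epsilon>'_def)
  have Vc: "continuous_on UNIV V" by (rule V_cont[OF Vd])
  have ne: "sphere e \<epsilon>' \<noteq> {}" using e' by simp
  obtain p where p: "p \<in> sphere e \<epsilon>'" "\<And>x. x \<in> sphere e \<epsilon>' \<Longrightarrow> V p \<le> V x"
    using continuous_attains_inf[OF compact_sphere ne continuous_on_subset[OF Vc]] by blast
  define m where "m = V p"
  have "m > 0" unfolding m_def
    using p(1) e' by (intro r(2)) (auto simp: dist_commute)
  obtain \<delta>0 where \<delta>0: "\<delta>0 > 0" "\<And>x. dist x e < \<delta>0 \<Longrightarrow> dist (V x) (V e) < m"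
    using Vc \<open>m > 0\<close> unfolding continuous_on_iff by blast
  show "\<exists>\<delta>>0. \<forall>y T. solution_on F y {0..T} \<longrightarrow> dist (y 0) e < \<delta> \<longrightarrow> (\<forall>t\<in>{0..T}. dist (y t) e < \<epsilon>)"
  proof (intro exI[of _ "min \<delta>0 \<epsilon>'"] conjI allI impI ballI)
    show "min \<delta>0 \<epsilon>' > 0" using \<delta>0 e' by simp
    fix y T t assume sol: "solution_on F y {0..T}" and y0: "dist (y 0) e < min \<delta>0 \<epsilon>'" and t: "t \<in> {0..T}"
    have "V (y 0) < m" using \<delta>0(2)[of "y 0"] y0 V0 by (simp add: dist_real_def)
    have "dist (y t) e < \<epsilon>'"
    proof (rule ccontr)
      assume "\<not> dist (y t) e < \<epsilon>'"
      then have ge: "\<epsilon>' \<le> dist (y t) e" by simp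
      have "continuous_on {0..t} y"
        using continuous_on_subset[OF sol_cont[OF sol]] t by auto
      then have cc: "continuous_on {0..t} (\<lambda>\<tau>. dist (y \<tau>) e)"
        by (intro continuous_intros)
      obtain s where s: "0 \<le> s" "s \<le> t" "dist (y s) e = \<epsilon>'"
        using IVT'[of "\<lambda>\<tau>. dist (y \<tau>) e" 0 \<epsilon>' t, OF _ ge _ cc] y0 t by auto
      have "V (y s) \<ge> m" unfolding m_def using p(2)[of "y s"] s(3) by (simp add: dist_commute)
      moreover have "V (y s) \<le> V (y 0)"
        by (rule V_descent[OF Vd Wn sol]) (use s t in \<open>auto simp: is_interval_cc\<close>)
      ultimately show False using \<open>V (y 0) < m\<close> by simp
    qed
    then show "dist (y t) e < \<epsilon>" using e' by simp
  qed
qed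


lemma conv:
  fixes F :: "'a::euclidean_space \<Rightarrow> 'a"
  assumes Fc: "continuous_on UNIV F"
    and Vd: "\<And>w. (V has_derivative (\<lambda>h. DV w \<bullet> h)) (at w)"
    and Wn: "\<And>w. DV w \<bullet> F w \<le> 0"
    and Vnn: "\<And>w. V w \<ge> 0"
    and WY: "\<And>w. DV w \<bullet> F w = 0 \<Longrightarrow> Y w = 0"
    and det: "detectable F Y e"
    and st: "lyap_stable F e"
    and sol: "solution_on F y {0..}"
    and bnd: "\<And>t. t \<ge> 0 \<Longrightarrow> norm (y t) \<le> B"
  shows "(y \<longlongrightarrow> e) at_top"
proof -
  define K where "K = cball (0::'a) B"
  have yK: "\<And>t. t \<ge> 0 \<Longrightarrow> y t \<in> K" using bnd by (simp add: K_def)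
  have "compact (F ` K)" unfolding K_def
    by (rule compact_continuous_image[OF continuous_on_subset[OF Fc]]) auto
  then have "bounded (F ` K)" by (rule compact_imp_bounded)
  then obtain L0 where L0': "L0 > 0" "\<forall>x\<in>F ` K. norm x \<le> L0" unfolding bounded_pos by blast
  then have L0: "L0 > 0" "\<And>x. x \<in> K \<Longrightarrow> norm (F x) \<le> L0" by auto
  define L where "L = L0"
  have L: "L \<ge> 0" "\<And>t. t \<ge> 0 \<Longrightarrow> norm (F (y t)) \<le> L" using L0 yK by (auto simp: L_def)
  have yd: "\<And>t. t \<in> {0..} \<Longrightarrow> (y has_vector_derivative F (y t)) (at t within {0..})"
    using sol unfolding solution_on_def by blast
  have lip: "norm (y s - y t) \<le> L * \<bar>s - t\<bar>" if "s \<ge> 0" "t \<ge> 0" for s t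
    by (rule vec_bound[of "{0..}" y "\<lambda>t. F (y t)"]) (use yd L that in auto)
  have uc: "uniformly_continuous_on K F" unfolding K_def
    by (rule compact_uniformly_continuous[OF continuous_on_subset[OF Fc]]) auto
  have est: "\<exists>d>0. \<forall>t0 s. t0 \<ge> 0 \<longrightarrow> s \<ge> 0 \<longrightarrow> \<bar>s - t0\<bar> < d \<longrightarrow>
      norm (y s - y t0 - (s - t0) *\<^sub>R F (y t0)) \<le> \<epsilon> * \<bar>s - t0\<bar>" if "\<epsilon> > 0" for \<epsilon>
  proof -
    obtain d0 where d0: "d0 > 0" "\<And>x x'. x \<in> K \<Longrightarrow> x' \<in> K \<Longrightarrow> dist x' x < d0 \<Longrightarrow> dist (F x') (F x) < \<epsilon>"
      using uniformly_continuous_onE[OF uc \<open>\<epsilon> > 0\<close>] by blast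
    define d where "d = d0 / (L + 1)"
    have "d > 0" using d0 L by (simp add: d_def)
    have Ld: "L * d < d0" using d0 L by (simp add: d_def field_simps)
    show ?thesis
    proof (intro exI[of _ d] conjI allI impI)
      show "d > 0" by fact
      fix t0 s :: real assume t0: "t0 \<ge> 0" and s: "s \<ge> 0" and sd: "\<bar>s - t0\<bar> < d"
      define S where "S = {min s t0..max s t0}"
      have SS: "S \<subseteq> {0..}" using s t0 by (auto simp: S_def)
      have gd: "((\<lambda>\<tau>. y \<tau> - \<tau> *\<^sub>R F (y t0)) has_vector_derivative (F (y \<tau>) - F (y t0))) (at \<tau> within S)"
        if "\<tau> \<in> S" for \<tau>
      proof -
        have "(y has_vector_derivative F (y \<tau>)) (at \<tau> within S)"
          using has_vector_derivative_within_subset[OF yd SS] that SS by auto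
        moreover have "((\<lambda>\<tau>. \<tau> *\<^sub>R F (y t0)) has_vector_derivative F (y t0)) (at \<tau> within S)"
          unfolding has_vector_derivative_def
          by (rule bounded_linear.has_derivative[OF bounded_linear_scaleR_left has_derivative_ident])
        ultimately show ?thesis by (rule has_vector_derivative_diff)
      qed
      have gb: "norm (F (y \<tau>) - F (y t0)) \<le> \<epsilon>" if "\<tau> \<in> S" for \<tau>
      proof -
        have \<tau>: "\<tau> \<ge> 0" "\<bar>\<tau> - t0\<bar> \<le> \<bar>s - t0\<bar>" using that s t0 by (auto simp: S_def)
        have "dist (y \<tau>) (y t0) \<le> L * \<bar>\<tau> - t0\<bar>" using lip[OF \<tau>(1) t0] by (simp add: dist_norm)
        also have "\<dots> \<le> L * d" using \<tau>(2) sd L by (intro mult_left_mono) auto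
        finally have "dist (y \<tau>) (y t0) < d0" using Ld by simp
        then have "dist (F (y \<tau>)) (F (y t0)) < \<epsilon>" by (rule d0(2)[OF yK[OF t0] yK[OF \<tau>(1)]])
        then show ?thesis by (simp add: dist_norm)
      qed
      have "norm ((y s - s *\<^sub>R F (y t0)) - (y t0 - t0 *\<^sub>R F (y t0))) \<le> \<epsilon> * \<bar>s - t0\<bar>"
        by (rule vec_bound[of S _ "\<lambda>\<tau>. F (y \<tau>) - F (y t0)"]) (use gd gb in \<open>auto simp: S_def\<close>)
      then show "norm (y s - y t0 - (s - t0) *\<^sub>R F (y t0)) \<le> \<epsilon> * \<bar>s - t0\<bar>"
        by (simp add: algebra_simps)
    qed
  qed
  have cQ: "countable {q. q \<in> \<rat> \<and> q \<ge> (0::real)}"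
    by (rule countable_subset[OF _ countable_rat]) auto
  obtain k where k: "strict_mono k"
    and kq: "\<And>q. q \<in> {q. q \<in> \<rat> \<and> q \<ge> (0::real)} \<Longrightarrow> \<exists>l. (\<lambda>n. y (real (k n) + q)) \<longlonglongrightarrow> l"
  proof (rule function_convergent_subsequence[OF cQ, of "\<lambda>n q. y (real n + q)" B])
    fix n :: nat and x :: real assume "x \<in> {q. q \<in> \<rat> \<and> q \<ge> 0}"
    then show "norm (y (real n + x)) \<le> B" by (intro bnd) simp
  qed blast
  have cv: "convergent (\<lambda>n. y (real (k n) + t))" if t: "t \<ge> 0" for t
  proof -
    have "Cauchy (\<lambda>n. y (real (k n) + t))"
      unfolding Cauchy_def
    proof (intro allI impI)
      fix \<epsilon> :: real assume "\<epsilon> > 0"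
      define \<eta> where "\<eta> = \<epsilon> / (3 * (L + 1))"
      have "\<eta> > 0" using \<open>\<epsilon> > 0\<close> L by (simp add: \<eta>_def)
      obtain q where q: "q \<in> \<rat>" "t < q" "q < t + \<eta>" using Rats_dense_in_real[of t "t + \<eta>"] \<open>\<eta> > 0\<close> by auto
      have "q \<ge> 0" using q t by simp
      obtain l where "(\<lambda>n. y (real (k n) + q)) \<longlonglongrightarrow> l" using kq q \<open>q \<ge> 0\<close> by auto
      then have "Cauchy (\<lambda>n. y (real (k n) + q))" using LIMSEQ_imp_Cauchy by blast
      moreover have "\<epsilon> / 3 > 0" using \<open>\<epsilon> > 0\<close> by simp
      ultimately obtain M where M: "\<And>m n. m \<ge> M \<Longrightarrow> n \<ge> M \<Longrightarrow> dist (y (real (k m) + q)) (y (real (k n) + q)) < \<epsilon> / 3"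
        unfolding Cauchy_def by blast
      have close: "dist (y (real (k n) + t)) (y (real (k n) + q)) < \<epsilon> / 3" for n
      proof -
        have "dist (y (real (k n) + t)) (y (real (k n) + q)) \<le> L * \<bar>t - q\<bar>"
          using lip[of "real (k n) + t" "real (k n) + q"] t \<open>q \<ge> 0\<close> by (simp add: dist_norm)
        also have "\<dots> \<le> L * \<eta>" using q L by (intro mult_left_mono) auto
        also have "\<dots> < \<epsilon> / 3" using L \<open>\<epsilon> > 0\<close> by (simp add: \<eta>_def field_simps)
        finally show ?thesis .
      qed
      show "\<exists>M. \<forall>m\<ge>M. \<forall>n\<ge>M. dist (y (real (k m) + t)) (y (real (k n) + t)) < \<epsilon>"
      proof (intro exI[of _ M] allI impI)
        fix m n assume "m \<ge> M" "n \<ge> M"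
        have "dist (y (real (k m) + t)) (y (real (k n) + t)) \<le>
              dist (y (real (k m) + t)) (y (real (k m) + q)) + dist (y (real (k m) + q)) (y (real (k n) + q))
              + dist (y (real (k n) + t)) (y (real (k n) + q))"
          using dist_triangle[of "y (real (k m) + t)" "y (real (k n) + t)" "y (real (k m) + q)"]
            dist_triangle[of "y (real (k m) + q)" "y (real (k n) + t)" "y (real (k n) + q)"]
            dist_commute[of "y (real (k n) + t)" "y (real (k n) + q)"] by linarith
        also have "\<dots> < \<epsilon> / 3 + \<epsilon> / 3 + \<epsilon> / 3"
          using close[of m] close[of n] M[OF \<open>m \<ge> M\<close> \<open>n \<ge> M\<close>] by linarith
        finally show "dist (y (real (k m) + t)) (y (real (k n) + t)) < \<epsilon>" by simp
      qed
    qed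
    then show ?thesis using Cauchy_convergent_iff by blast
  qed
  define z where "z t = lim (\<lambda>n. y (real (k n) + t))" for t
  have Z: "(\<lambda>n. y (real (k n) + t)) \<longlonglongrightarrow> z t" if "t \<ge> 0" for t
    using cv[OF that] by (simp add: z_def convergent_LIMSEQ_iff)
  have FZ: "(\<lambda>n. F (y (real (k n) + t))) \<longlonglongrightarrow> F (z t)" if "t \<ge> 0" for t
  proof -
    have "isCont F (z t)" using Fc by (simp add: continuous_on_eq_continuous_at)
    then show ?thesis by (rule isCont_tendsto_compose[OF _ Z[OF that]])
  qed
  have zsol: "solution_on F z {0..}"
    unfolding solution_on_def has_vector_derivative_def
  proof
    fix t :: real assume "t \<in> {0..}"
    then have t: "t \<ge> 0" by simp
    show "(z has_derivative (\<lambda>h. h *\<^sub>R F (z t))) (at t within {0..})"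
      unfolding has_derivative_within_alt
    proof (intro conjI allI impI)
      show "bounded_linear (\<lambda>h. h *\<^sub>R F (z t))" by (rule bounded_linear_scaleR_left)
      fix \<epsilon> :: real assume "\<epsilon> > 0"
      obtain d where d: "d > 0" "\<And>t0 s. t0 \<ge> 0 \<Longrightarrow> s \<ge> 0 \<Longrightarrow> \<bar>s - t0\<bar> < d \<Longrightarrow>
          norm (y s - y t0 - (s - t0) *\<^sub>R F (y t0)) \<le> \<epsilon> * \<bar>s - t0\<bar>"
        using est[OF \<open>\<epsilon> > 0\<close>] by blast
      show "\<exists>d>0. \<forall>s\<in>{0..}. norm (s - t) < d \<longrightarrow> norm (z s - z t - (s - t) *\<^sub>R F (z t)) \<le> \<epsilon> * norm (s - t)"
      proof (intro exI[of _ d] conjI ballI impI)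
        show "d > 0" by fact
        fix s :: real assume "s \<in> {0..}" "norm (s - t) < d"
        then have s: "s \<ge> 0" "\<bar>s - t\<bar> < d" by auto
        have lim: "(\<lambda>n. y (real (k n) + s) - y (real (k n) + t) - (s - t) *\<^sub>R F (y (real (k n) + t)))
                 \<longlonglongrightarrow> z s - z t - (s - t) *\<^sub>R F (z t)"
          by (intro tendsto_intros Z FZ s t)
        have "norm (z s - z t - (s - t) *\<^sub>R F (z t)) \<le> \<epsilon> * \<bar>s - t\<bar>"
        proof (rule Lim_norm_ubound[OF _ lim])
          show "\<forall>\<^sub>F n in sequentially. norm (y (real (k n) + s) - y (real (k n) + t) - (s - t) *\<^sub>R F (y (real (k n) + t))) \<le> \<epsilon> * \<bar>s - t\<bar>"
            using d(2)[of "real (k n) + t" "real (k n) + s" for n] s t by (auto intro!: always_eventually)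
        qed simp
        then show "norm (z s - z t - (s - t) *\<^sub>R F (z t)) \<le> \<epsilon> * norm (s - t)" by simp
      qed
    qed
  qed
  define c where "c = Inf ((\<lambda>t. V (y t)) ` {0..})"
  have bdd: "bdd_below ((\<lambda>t. V (y t)) ` {0..})" using Vnn by (intro bdd_belowI[of _ 0]) auto
  have cle: "c \<le> V (y t)" if "t \<ge> 0" for t
    unfolding c_def using that by (intro cInf_lower bdd) auto
  have Vlim: "(\<lambda>n. V (y (real (k n) + t))) \<longlonglongrightarrow> c" if t: "t \<ge> 0" for t
  proof (rule LIMSEQ_I)
    fix \<epsilon> :: real assume "\<epsilon> > 0"
    have "c < c + \<epsilon>" using \<open>\<epsilon> > 0\<close> by simp
    then have "\<exists>x\<in>(\<lambda>t. V (y t)) ` {0..}. x < c + \<epsilon>"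
      unfolding c_def by (subst cInf_less_iff[OF _ bdd, symmetric]) auto
    then obtain t0 where t0: "t0 \<ge> 0" "V (y t0) < c + \<epsilon>" by auto
    show "\<exists>N. \<forall>n\<ge>N. norm (V (y (real (k n) + t)) - c) < \<epsilon>"
    proof (intro exI[of _ "nat \<lceil>t0\<rceil>"] allI impI)
      fix n assume n: "n \<ge> nat \<lceil>t0\<rceil>"
      have "real (k n) \<ge> real n" using seq_suble[OF k] by simp
      then have "real (k n) + t \<ge> t0" using n t by linarith
      then have "V (y (real (k n) + t)) \<le> V (y t0)"
        by (intro V_descent[OF Vd Wn sol]) (use t0 t in auto)
      moreover have "c \<le> V (y (real (k n) + t))" using t by (intro cle) simp
      ultimately show "norm (V (y (real (k n) + t)) - c) < \<epsilon>" using t0 by simp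
    qed
  qed
  have Vz: "V (z t) = c" if t: "t \<ge> 0" for t
  proof -
    have "isCont V (z t)" using V_cont[OF Vd, of UNIV] by (simp add: continuous_on_eq_continuous_at)
    then have "(\<lambda>n. V (y (real (k n) + t))) \<longlonglongrightarrow> V (z t)"
      by (rule isCont_tendsto_compose[OF _ Z[OF t]])
    then show ?thesis using Vlim[OF t] LIMSEQ_unique by blast
  qed
  have Yz: "Y (z t) = 0" if t: "t \<ge> 0" for t
  proof -
    have d1: "((\<lambda>t. V (z t)) has_real_derivative (DV (z t) \<bullet> F (z t))) (at t within {0..})"
      using zsol t unfolding solution_on_def by (intro V_deriv[OF Vd]) auto
    have d2: "((\<lambda>t. V (z t)) has_vector_derivative 0) (at t within {0..})"
      by (rule has_vector_derivative_transform_within[OF has_vector_derivative_const[of c] zero_less_one])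
         (use t Vz in auto)
    have nb: "at t within {0..} \<noteq> bot"
    proof -
      have "t islimpt {0..t+1}" using t by simp
      then have "t islimpt {0..}" by (rule islimpt_subset) auto
      then show ?thesis using trivial_limit_within by blast
    qed
    have "DV (z t) \<bullet> F (z t) = 0"
      using vector_derivative_unique_within[OF nb d1[unfolded has_real_derivative_iff_has_vector_derivative] d2] .
    then show ?thesis by (rule WY)
  qed
  have zlim: "(z \<longlongrightarrow> e) at_top" using det zsol Yz unfolding detectable_def by blast
  show ?thesis
    unfolding tendsto_iff
  proof (intro allI impI)
    fix \<epsilon> :: real assume "\<epsilon> > 0"
    obtain \<delta> where \<delta>: "\<delta> > 0" "\<And>y T. solution_on F y {0..T} \<Longrightarrow> dist (y 0) e < \<delta> \<Longrightarrow> \<forall>t\<in>{0..T}. dist (y t) e < \<epsilon>"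
      using st \<open>\<epsilon> > 0\<close> unfolding lyap_stable_def by blast
    have "\<forall>\<^sub>F t in at_top. dist (z t) e < \<delta> / 2" using zlim half_gt_zero[OF \<delta>(1)] unfolding tendsto_iff by blast
    then obtain T1 where T1: "\<And>t. t \<ge> T1 \<Longrightarrow> dist (z t) e < \<delta> / 2" unfolding eventually_at_top_linorder by blast
    define T0 where "T0 = max T1 0"
    have T0: "T0 \<ge> 0" "dist (z T0) e < \<delta> / 2" using T1[of T0] by (auto simp: T0_def)
    have "\<forall>\<^sub>F n in sequentially. dist (y (real (k n) + T0)) (z T0) < \<delta> / 2"
      using Z[OF T0(1)] half_gt_zero[OF \<delta>(1)] unfolding tendsto_iff by blast
    then obtain n where n: "dist (y (real (k n) + T0)) (z T0) < \<delta> / 2" using eventually_sequentially by auto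
    define s0 where "s0 = real (k n) + T0"
    have s0: "s0 \<ge> 0" "dist (y s0) e < \<delta>" using n T0 dist_triangle[of "y s0" e "z T0"] by (auto simp: s0_def)
    show "\<forall>\<^sub>F t in at_top. dist (y t) e < \<epsilon>"
      unfolding eventually_at_top_linorder
    proof (intro exI[of _ s0] allI impI)
      fix s assume "s \<ge> s0"
      have "solution_on F (\<lambda>t. y (s0 + t)) {0..s - s0}"
        by (rule sol_subset[OF sol_shift[OF sol s0(1)]]) auto
      moreover have "dist ((\<lambda>t. y (s0 + t)) 0) e < \<delta>" using s0(2) by simp
      ultimately have all: "\<forall>t\<in>{0..s - s0}. dist (y (s0 + t)) e < \<epsilon>" by (rule \<delta>(2))
      have "s - s0 \<in> {0..s - s0}" using \<open>s \<ge> s0\<close> by simp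
      from bspec[OF all this] have "dist (y (s0 + (s - s0))) e < \<epsilon>" .
      then show "dist (y s) e < \<epsilon>" by simp
    qed
  qed
qed


lemma asym:
  fixes F :: "'a::euclidean_space \<Rightarrow> 'a"
  assumes Fc: "continuous_on UNIV F"
    and Vd: "\<And>w. (V has_derivative (\<lambda>h. DV w \<bullet> h)) (at w)"
    and Wn: "\<And>w. DV w \<bullet> F w \<le> 0"
    and Vnn: "\<And>w. V w \<ge> 0"
    and WY: "\<And>w. DV w \<bullet> F w = 0 \<Longrightarrow> Y w = 0"
    and det: "detectable F Y e"
    and st: "lyap_stable F e"
  shows "asym_stable F e"
  unfolding asym_stable_def
proof (intro conjI st)
  obtain \<delta> where \<delta>: "\<delta> > 0" "\<And>y T. solution_on F y {0..T} \<Longrightarrow> dist (y 0) e < \<delta> \<Longrightarrow> \<forall>t\<in>{0..T}. dist (y t) e < 1"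
    using st unfolding lyap_stable_def by (meson zero_less_one)
  show "\<exists>\<delta>>0. \<forall>y. solution_on F y {0..} \<longrightarrow> dist (y 0) e < \<delta> \<longrightarrow> (y \<longlongrightarrow> e) at_top"
  proof (intro exI[of _ \<delta>] conjI allI impI)
    show "\<delta> > 0" by fact
    fix y assume sol: "solution_on F y {0..}" and y0: "dist (y 0) e < \<delta>"
    have "norm (y t) \<le> norm e + 1" if "t \<ge> 0" for t
    proof -
      have "solution_on F y {0..t}" by (rule sol_subset[OF sol]) auto
      from \<delta>(2)[OF this y0] that have "dist (y t) e < 1" by auto
      then show ?thesis using norm_triangle_ineq2[of "y t" e] by (simp add: dist_norm)
    qed
    then show "(y \<longlongrightarrow> e) at_top" using conv[OF Fc Vd Wn Vnn WY det st sol] by blast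
  qed
qed

lemma glob:
  fixes F :: "'a::euclidean_space \<Rightarrow> 'a"
  assumes Fc: "continuous_on UNIV F"
    and Vd: "\<And>w. (V has_derivative (\<lambda>h. DV w \<bullet> h)) (at w)"
    and Wn: "\<And>w. DV w \<bullet> F w \<le> 0"
    and Vnn: "\<And>w. V w \<ge> 0"
    and st: "lyap_stable F e"
    and SB: "\<And>M. \<exists>R. \<forall>x. V x \<le> M \<longrightarrow> norm x \<le> R"
  shows "glob_stable F e"
    and "(\<And>w. DV w \<bullet> F w = 0 \<Longrightarrow> Y w = 0) \<Longrightarrow> detectable F Y e \<Longrightarrow> glob_asym_stable F e"
proof -
  show "glob_stable F e"
    unfolding glob_stable_def
  proof (intro conjI st allI)
    fix r :: real
    have "compact (V ` cball e r)"
      by (rule compact_continuous_image[OF V_cont[OF Vd] compact_cball])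
    then have "bounded (V ` cball e r)" by (rule compact_imp_bounded)
    then obtain M where M: "M > 0" "\<forall>x\<in>V ` cball e r. norm x \<le> M" unfolding bounded_pos by blast
    obtain R where R: "\<And>x. V x \<le> M \<Longrightarrow> norm x \<le> R" using SB by blast
    show "\<exists>B. \<forall>y T. solution_on F y {0..T} \<longrightarrow> dist (y 0) e < r \<longrightarrow> (\<forall>t\<in>{0..T}. dist (y t) e < B)"
    proof (intro exI[of _ "R + norm e + 1"] allI impI ballI)
      fix y T t assume sol: "solution_on F y {0..T}" and y0: "dist (y 0) e < r" and t: "t \<in> {0..T}"
      have "y 0 \<in> cball e r" using y0 by (simp add: dist_commute)
      then have "\<bar>V (y 0)\<bar> \<le> M" using M(2) by auto
      then have "V (y 0) \<le> M" by simp
      moreover have "V (y t) \<le> V (y 0)"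
        by (rule V_descent[OF Vd Wn sol]) (use t in \<open>auto simp: is_interval_cc\<close>)
      ultimately have "norm (y t) \<le> R" using R by force
      then show "dist (y t) e < R + norm e + 1"
        using norm_triangle_ineq4[of "y t" e] by (simp add: dist_norm)
    qed
  qed
  assume WY: "\<And>w. DV w \<bullet> F w = 0 \<Longrightarrow> Y w = 0" and det: "detectable F Y e"
  show "glob_asym_stable F e"
    unfolding glob_asym_stable_def
  proof (intro conjI st allI impI)
    fix y assume sol: "solution_on F y {0..}"
    obtain R where R: "\<And>x. V x \<le> V (y 0) \<Longrightarrow> norm x \<le> R" using SB by blast
    have "norm (y t) \<le> R" if "t \<ge> 0" for t
    proof -
      have "V (y t) \<le> V (y 0)"
        by (rule V_descent[OF Vd Wn sol]) (use that in \<open>auto simp: is_interval_ci\<close>)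
      then show ?thesis by (rule R)
    qed
    then show "(y \<longlongrightarrow> e) at_top" using conv[OF Fc Vd Wn Vnn WY det st sol] by blast
  qed
qed



lemma mv_uminus: "(- A) *v (x::real^'n) = - (A *v x)"
  by (simp add: matrix_vector_mult_def vec_eq_iff sum_negf)

lemma mv_scaleR_left: "(c *\<^sub>R A) *v (x::real^'n) = c *\<^sub>R (A *v x)"
  by (simp add: matrix_vector_mult_def vec_eq_iff sum_distrib_left mult.assoc)

lemma transpose_add: "transpose (A + B) = transpose A + transpose (B::real^'n^'m)"
  by (simp add: transpose_def vec_eq_iff)

lemma transpose_uminus: "transpose (- A) = - transpose (A::real^'n^'m)"
  by (simp add: transpose_def vec_eq_iff)

lemma inner_mv: "a \<bullet> (A *v b) = (transpose A *v a) \<bullet> (b::real^'n)"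
  by (simp add: dot_lmul_matrix)

lemma skew_zero:
  assumes "transpose A = - A" shows "x \<bullet> (A *v (x::real^'n)) = 0"
proof -
  have "x \<bullet> (A *v x) = (transpose A *v x) \<bullet> x" by (rule inner_mv)
  also have "\<dots> = - (x \<bullet> (A *v x))" using assms by (simp add: mv_uminus inner_commute)
  finally show ?thesis by simp
qed

lemma Jc1_Rc1: "Jc1 G - Rc1 G = (G::real^'m^'m)"
proof -
  have "Jc1 G - Rc1 G = (1/2) *\<^sub>R (G - transpose G) + (1/2) *\<^sub>R (G + transpose G)"
    by (simp add: Jc1_def Rc1_def)
  also have "\<dots> = (1/2) *\<^sub>R G + (1/2) *\<^sub>R G" by (simp add: algebra_simps)
  also have "\<dots> = G" by (simp add: scaleR_left_distrib[symmetric])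
  finally show ?thesis .
qed

lemma alg:
  fixes Jaa Raa G :: "real^'m^'m" and Jau Rau :: "real^'s^'m" and Juu Ruu :: "real^'s^'s"
    and ga du da Kw :: "real^'m" and gu :: "real^'s"
  assumes skew: "transpose Juu = - Juu"
  defines "u \<equiv> (- Jaa + Raa + Jc1 G - Rc1 G) *v ga + (Jc1 G - Rc1 G) *v Kw + 2 *\<^sub>R (Rau *v gu)"
  defines "a \<equiv> (Jaa - Raa) *v ga + (Jau - Rau) *v gu + u - G *v da"
  defines "b \<equiv> (- transpose Jau - transpose Rau) *v ga + (Juu - Ruu) *v gu - transpose (Jau + Rau) *v du"
  defines "Y \<equiv> ga + Kw - da"
  shows "a = G *v Y + (Jau + Rau) *v gu"
    and "a - (Jau + Rau) *v gu = G *v Y"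
    and "b = - (transpose (Jau + Rau) *v (ga + du)) + Juu *v gu - Ruu *v gu"
    and "(ga + du) \<bullet> a + gu \<bullet> b + (Kw - (da + du)) \<bullet> (a - (Jau + Rau) *v gu)
         = Y \<bullet> (G *v Y) - gu \<bullet> (Ruu *v gu)"
proof -
  have G: "(- Jaa + Raa + Jc1 G - Rc1 G) = - Jaa + Raa + G" using Jc1_Rc1[of G]
    by (simp add: algebra_simps)
  show a: "a = G *v Y + (Jau + Rau) *v gu"
    unfolding a_def u_def Y_def G Jc1_Rc1
    by (simp add: algebra_simps mv_uminus scaleR_2)
  then show a2: "a - (Jau + Rau) *v gu = G *v Y" by simp
  show b: "b = - (transpose (Jau + Rau) *v (ga + du)) + Juu *v gu - Ruu *v gu"
    unfolding b_def by (simp add: algebra_simps mv_uminus transpose_add)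
  have cross: "gu \<bullet> (transpose (Jau + Rau) *v (ga + du)) = (ga + du) \<bullet> ((Jau + Rau) *v gu)"
    by (simp add: inner_mv inner_commute)
  have sk: "gu \<bullet> (Juu *v gu) = 0" by (rule skew_zero[OF skew])
  have Y: "Y = (ga + du) + (Kw - (da + du))" by (simp add: Y_def algebra_simps)
  show "(ga + du) \<bullet> a + gu \<bullet> b + (Kw - (da + du)) \<bullet> (a - (Jau + Rau) *v gu)
         = Y \<bullet> (G *v Y) - gu \<bullet> (Ruu *v gu)"
  proof -
    have "(ga + du) \<bullet> a + gu \<bullet> b + (Kw - (da + du)) \<bullet> (a - (Jau + Rau) *v gu)
       = ((ga + du) \<bullet> (G *v Y) + (Kw - (da + du)) \<bullet> (G *v Y))
         + ((ga + du) \<bullet> ((Jau + Rau) *v gu) - gu \<bullet> (transpose (Jau + Rau) *v (ga + du)))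
         + gu \<bullet> (Juu *v gu) - gu \<bullet> (Ruu *v gu)"
      unfolding a2 unfolding a b inner_add_right inner_diff_right inner_minus_right by linarith
    also have "\<dots> = Y \<bullet> (G *v Y) - gu \<bullet> (Ruu *v gu)"
      unfolding cross sk Y inner_add_left[symmetric] by simp
    finally show ?thesis .
  qed
qed


lemma grad_eq:
  fixes f :: "'a::real_inner \<Rightarrow> real"
  assumes "GDERIV f x :> g" shows "grad f x = g"
  unfolding grad_def
proof (rule the_equality[where P="\<lambda>g. GDERIV f x :> g", OF assms])
  fix g' assume "GDERIV f x :> g'"
  then have "(\<lambda>h. h \<bullet> g') = (\<lambda>h. h \<bullet> g)"
    using assms unfolding gderiv_def by (rule has_derivative_unique)
  then have "(g' - g) \<bullet> g' = (g' - g) \<bullet> g" by meson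
  then have "(g' - g) \<bullet> (g' - g) = 0" by (simp add: inner_diff_right)
  then show "g' = g" by simp
qed

lemma grad_works:
  fixes f :: "'a::euclidean_space \<Rightarrow> real"
  assumes "f differentiable (at x)"
  shows "GDERIV f x :> (\<Sum>b\<in>Basis. frechet_derivative f (at x) b *\<^sub>R b)"
    and "grad f x = (\<Sum>b\<in>Basis. frechet_derivative f (at x) b *\<^sub>R b)"
    and "(f has_derivative (\<lambda>h. h \<bullet> grad f x)) (at x)"
proof -
  define D where "D = frechet_derivative f (at x)"
  have hD: "(f has_derivative D) (at x)" using assms frechet_derivative_works D_def by blast
  have lD: "linear D" using hD has_derivative_linear by blast
  have eq: "D = (\<lambda>h. h \<bullet> (\<Sum>b\<in>Basis. D b *\<^sub>R b))"
  proof
    fix h :: 'a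
    have "D h = D h \<bullet> 1" by simp
    also have "\<dots> = (\<Sum>i\<in>Basis. (h \<bullet> i) * (D i \<bullet> 1))" by (rule Linear_Algebra.linear_componentwise[OF lD])
    also have "\<dots> = h \<bullet> (\<Sum>b\<in>Basis. D b *\<^sub>R b)" by (simp add: inner_sum_right mult.commute)
    finally show "D h = h \<bullet> (\<Sum>b\<in>Basis. D b *\<^sub>R b)" .
  qed
  show g: "GDERIV f x :> (\<Sum>b\<in>Basis. frechet_derivative f (at x) b *\<^sub>R b)"
    unfolding gderiv_def using hD eq by (simp add: D_def)
  show gr: "grad f x = (\<Sum>b\<in>Basis. frechet_derivative f (at x) b *\<^sub>R b)" by (rule grad_eq[OF g])
  show "(f has_derivative (\<lambda>h. h \<bullet> grad f x)) (at x)"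
    using g unfolding gderiv_def gr .
qed

lemma smooth_cont: "smooth f \<Longrightarrow> continuous_on UNIV f"
  unfolding smooth_def by (metis Ck.simps(1))

lemma smooth_diff: "smooth f \<Longrightarrow> f differentiable (at x)"
  unfolding smooth_def by (metis Ck.simps(2) One_nat_def)

lemma grad_cont:
  fixes f :: "'a::euclidean_space \<Rightarrow> real"
  assumes "smooth f" shows "continuous_on UNIV (grad f)"
proof -
  have C1: "Ck (Suc 0) f" using assms unfolding smooth_def by blast
  then have c: "\<And>v. continuous_on UNIV (\<lambda>x. frechet_derivative f (at x) v)" by simp
  have "grad f = (\<lambda>x. \<Sum>b\<in>Basis. frechet_derivative f (at x) b *\<^sub>R b)"
    using grad_works(2)[OF smooth_diff[OF assms]] by blast
  then show ?thesis by (simp add: continuous_intros c)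
qed

lemma cont_mv:
  fixes M :: "'a::topological_space \<Rightarrow> real^'n^'m"
  assumes "continuous_on S M" "continuous_on S v"
  shows "continuous_on S (\<lambda>x. M x *v v x)"
  unfolding matrix_vector_mult_def by (intro continuous_intros assms)

lemma cont_transpose:
  fixes M :: "'a::topological_space \<Rightarrow> real^'n^'m"
  assumes "continuous_on S M"
  shows "continuous_on S (\<lambda>x. transpose (M x))"
  unfolding transpose_def by (intro continuous_intros assms)

lemma cont_x:
  assumes "continuous_on UNIV f"
  shows "continuous_on S (\<lambda>w. f (fst w, fst (snd w)))"
  by (rule continuous_on_compose2[OF assms]) (auto intro!: continuous_intros)


lemma Vd_lemma:
  fixes H :: "(real^'m) \<times> (real^'s) \<Rightarrow> real" and du wcbar :: "real^'m" and Ki :: "real^'m^'m"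
    and c :: real
  assumes hH: "\<And>z. (H has_derivative (\<lambda>h. h \<bullet> grad H z)) (at z)"
    and Ki_sym: "transpose Ki = Ki"
  shows "((\<lambda>w::(real^'m) \<times> (real^'s) \<times> (real^'m). H (fst w, fst (snd w)) + fst w \<bullet> du - c
            + (1/2) * ((snd (snd w) - wcbar) \<bullet> (Ki *v (snd (snd w) - wcbar))))
         has_derivative (\<lambda>h. (grad_a H (fst w, fst (snd w)) + du, grad_u H (fst w, fst (snd w)),
              Ki *v (snd (snd w) - wcbar)) \<bullet> h)) (at w)"
proof -
  define z where "z = (fst w, fst (snd w))"
  define p where "p = snd (snd w) - wcbar"
  have dX: "((\<lambda>w::(real^'m) \<times> (real^'s) \<times> (real^'m). (fst w, fst (snd w))) has_derivative (\<lambda>h. (fst h, fst (snd h)))) (at w)"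
    by (intro has_derivative_Pair has_derivative_fst has_derivative_snd has_derivative_ident)
  have d1: "((\<lambda>w::(real^'m) \<times> (real^'s) \<times> (real^'m). H (fst w, fst (snd w))) has_derivative (\<lambda>h. (fst h, fst (snd h)) \<bullet> grad H z)) (at w)"
    using has_derivative_compose[OF dX hH] by (simp add: z_def)
  have d2: "((\<lambda>w::(real^'m) \<times> (real^'s) \<times> (real^'m). fst w \<bullet> du) has_derivative (\<lambda>h. fst h \<bullet> du)) (at w)"
    by (rule bounded_linear.has_derivative[OF bounded_linear_inner_left has_derivative_fst[OF has_derivative_ident]])
  have dq: "((\<lambda>w::(real^'m) \<times> (real^'s) \<times> (real^'m). snd (snd w) - wcbar) has_derivative (\<lambda>h. snd (snd h))) (at w)"
    using has_derivative_diff[OF has_derivative_snd[OF has_derivative_snd[OF has_derivative_ident]] has_derivative_const]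
    by simp
  have dK: "((\<lambda>w::(real^'m) \<times> (real^'s) \<times> (real^'m). Ki *v (snd (snd w) - wcbar)) has_derivative (\<lambda>h. Ki *v snd (snd h))) (at w)"
    by (rule bounded_linear.has_derivative[OF matrix_vector_mul_bounded_linear dq])
  have d3: "((\<lambda>w::(real^'m) \<times> (real^'s) \<times> (real^'m). (snd (snd w) - wcbar) \<bullet> (Ki *v (snd (snd w) - wcbar)))
      has_derivative (\<lambda>h. p \<bullet> (Ki *v snd (snd h)) + snd (snd h) \<bullet> (Ki *v p))) (at w)"
    using has_derivative_inner[OF dq dK] by (simp add: p_def)
  have d4: "((\<lambda>w::(real^'m) \<times> (real^'s) \<times> (real^'m). (1/2) * ((snd (snd w) - wcbar) \<bullet> (Ki *v (snd (snd w) - wcbar))))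
      has_derivative (\<lambda>h. (1/2) * (p \<bullet> (Ki *v snd (snd h)) + snd (snd h) \<bullet> (Ki *v p)))) (at w)"
    by (rule bounded_linear.has_derivative[OF bounded_linear_mult_right d3])
  have dall: "((\<lambda>w::(real^'m) \<times> (real^'s) \<times> (real^'m). H (fst w, fst (snd w)) + fst w \<bullet> du - c
            + (1/2) * ((snd (snd w) - wcbar) \<bullet> (Ki *v (snd (snd w) - wcbar))))
       has_derivative (\<lambda>h. (fst h, fst (snd h)) \<bullet> grad H z + fst h \<bullet> du - 0
            + (1/2) * (p \<bullet> (Ki *v snd (snd h)) + snd (snd h) \<bullet> (Ki *v p)))) (at w)"
    by (intro has_derivative_add has_derivative_diff d1 d2 d4 has_derivative_const)
  have eq: "(\<lambda>h. (fst h, fst (snd h)) \<bullet> grad H z + fst h \<bullet> du - 0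
            + (1/2) * (p \<bullet> (Ki *v snd (snd h)) + snd (snd h) \<bullet> (Ki *v p)))
      = (\<lambda>h. (grad_a H z + du, grad_u H z, Ki *v p) \<bullet> h)"
  proof
    fix h :: "(real^'m) \<times> (real^'s) \<times> (real^'m)"
    obtain h1 h2 h3 where h: "h = (h1, h2, h3)" by (cases h) auto
    obtain g1 g2 where g: "grad H z = (g1, g2)" by (cases "grad H z") auto
    have sym: "p \<bullet> (Ki *v h3) = h3 \<bullet> (Ki *v p)"
      using inner_mv[of p Ki h3] Ki_sym by (simp add: inner_commute)
    show "(fst h, fst (snd h)) \<bullet> grad H z + fst h \<bullet> du - 0
            + (1/2) * (p \<bullet> (Ki *v snd (snd h)) + snd (snd h) \<bullet> (Ki *v p))
          = (grad_a H z + du, grad_u H z, Ki *v p) \<bullet> h"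
      unfolding h grad_a_def grad_u_def g using sym by (simp add: inner_commute inner_add_left algebra_simps)
  qed
  show ?thesis using dall[unfolded eq] unfolding z_def p_def .
qed


lemma pd_lower:
  fixes A :: "real^'n^'n"
  assumes "pos_def A"
  shows "\<exists>l>0. \<forall>v. v \<bullet> (A *v v) \<ge> l * (norm v)^2"
proof -
  have ne: "sphere (0::real^'n) 1 \<noteq> {}" by simp
  have c: "continuous_on (sphere 0 1) (\<lambda>v::real^'n. v \<bullet> (A *v v))"
    by (intro continuous_intros cont_mv)
  obtain p where p: "p \<in> sphere 0 1" "\<And>v. v \<in> sphere 0 1 \<Longrightarrow> p \<bullet> (A *v p) \<le> v \<bullet> (A *v v)"
    using continuous_attains_inf[OF compact_sphere ne c] by blast
  have "p \<noteq> 0" using p(1) by auto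
  then have lpos: "p \<bullet> (A *v p) > 0" using assms unfolding pos_def_def by blast
  show ?thesis
  proof (intro exI[of _ "p \<bullet> (A *v p)"] conjI allI lpos)
    fix v :: "real^'n"
    show "v \<bullet> (A *v v) \<ge> (p \<bullet> (A *v p)) * (norm v)^2"
    proof (cases "v = 0")
      case True then show ?thesis by simp
    next
      case False
      define u where "u = (1 / norm v) *\<^sub>R v"
      have u: "u \<in> sphere 0 1" using False by (simp add: u_def)
      have v: "v = norm v *\<^sub>R u" using False by (simp add: u_def)
      have "v \<bullet> (A *v v) = (norm v)^2 * (u \<bullet> (A *v u))"
        by (subst (1 2) v) (simp add: matrix_vector_mult_scaleR power2_eq_square)
      moreover have "p \<bullet> (A *v p) \<le> u \<bullet> (A *v u)" by (rule p(2)[OF u])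
      ultimately show ?thesis using mult_right_mono[of "p \<bullet> (A *v p)" "u \<bullet> (A *v u)" "(norm v)^2"] by (simp add: mult.commute)
    qed
  qed
qed

lemma Ki_inv:
  fixes Ki :: "real^'m^'m"
  assumes "pos_def Ki"
  shows "Ki *v (matrix_inv Ki *v v) = v"
proof -
  have "inj ((*v) Ki)"
  proof (rule injI)
    fix a b assume "Ki *v a = Ki *v b"
    then have "Ki *v (a - b) = 0" by (simp add: matrix_vector_mult_diff_distrib)
    then show "a = b" using assms unfolding pos_def_def by (metis inner_zero_right less_irrefl eq_iff_diff_eq_0)
  qed
  then have "\<exists>B. B ** Ki = mat 1" using matrix_left_invertible_injective by blast
  then have "invertible Ki" using invertible_left_inverse by blast
  then have "Ki ** matrix_inv Ki = mat 1 \<and> matrix_inv Ki ** Ki = mat 1"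
    unfolding invertible_def matrix_inv_def by (rule someI_ex)
  then show ?thesis by (simp add: matrix_vector_mul_assoc)
qed

lemma norm_triple: "norm (w::('a::real_normed_vector) \<times> ('b::real_normed_vector) \<times> ('c::real_normed_vector))
   \<le> norm (fst w, fst (snd w)) + norm (snd (snd w))"
proof -
  obtain a b c where w: "w = (a, b, c)" by (cases w) auto
  have "w = (a, b, 0) + (0, 0, c)" by (simp add: w)
  then have "norm w \<le> norm (a, b, 0::'c) + norm (0::'a, 0::'b, c)" by (metis norm_triangle_ineq)
  then show ?thesis by (simp add: w norm_Pair)
qed

lemma dist_triple: "dist (fst w, fst (snd w)) (fst v, fst (snd v)) \<le> dist (w::('a::metric_space) \<times> ('b::metric_space) \<times> ('c::metric_space)) v"
proof -
  obtain a b c where w: "w = (a, b, c)" by (cases w) auto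
  obtain a' b' c' where v: "v = (a', b', c')" by (cases v) auto
  show ?thesis unfolding w v dist_Pair_Pair
    by (simp add: real_sqrt_le_mono)
qed



theorem proposition4:
  fixes Jaa :: "(real^'m) \<times> (real^'s) \<Rightarrow> real^'m^'m"
    and Jau :: "(real^'m) \<times> (real^'s) \<Rightarrow> real^'s^'m"
    and Juu :: "(real^'m) \<times> (real^'s) \<Rightarrow> real^'s^'s"
    and Raa :: "(real^'m) \<times> (real^'s) \<Rightarrow> real^'m^'m"
    and Rau :: "(real^'m) \<times> (real^'s) \<Rightarrow> real^'s^'m"
    and Ruu :: "(real^'m) \<times> (real^'s) \<Rightarrow> real^'s^'s"
    and Gd :: "(real^'m) \<times> (real^'s) \<Rightarrow> real^'m^'m"
    and H :: "(real^'m) \<times> (real^'s) \<Rightarrow> real"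
    and da du :: "real^'m"
    and Ki :: "real^'m^'m"
    and xbar :: "(real^'m) \<times> (real^'s)"
  assumes H_smooth: "smooth H" and H_nonneg: "\<forall>x. H x \<ge> 0"
    and smooth_J: "smooth Jaa" "smooth Jau" "smooth Juu"
    and smooth_R: "smooth Raa" "smooth Rau" "smooth Ruu"
    and smooth_Gd: "smooth Gd"
    and J_skew: "\<forall>x. transpose (Jaa x) = - Jaa x" "\<forall>x. transpose (Juu x) = - Juu x"
    and R_sym: "\<forall>x. transpose (Raa x) = Raa x" "\<forall>x. transpose (Ruu x) = Ruu x"
    and R_psd: "\<forall>x. block_psd (Raa x) (Rau x) (Ruu x)"
    and Gd_rank: "\<forall>x. rank (Gd x) = CARD('m)"
    and Gd_neg: "\<forall>x. neg_def (Gd x)"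
    and xbar_min: "\<forall>x. H xbar + fst xbar \<bullet> du \<le> H x + fst x \<bullet> du"
    and xbar_isol: "\<exists>r>0. \<forall>x. x \<noteq> xbar \<longrightarrow> dist x xbar < r \<longrightarrow>
                      H xbar + fst xbar \<bullet> du < H x + fst x \<bullet> du"
    and Ki_sym: "transpose Ki = Ki" and Ki_pd: "pos_def Ki"
  shows "let F = closed_loop_w Jaa Jau Juu Raa Rau Ruu Gd da du Ki H;
             HH = (\<lambda>x. H x + fst x \<bullet> du);
             wcbar = matrix_inv Ki *v (da + du);
             wbar = (fst xbar, snd xbar, wcbar);
             Yu = (\<lambda>w::(real^'m) \<times> (real^'s) \<times> (real^'m).
                     grad_a HH (fst w, fst (snd w)) + Ki *v (snd (snd w) - wcbar))
         in lyap_stable F wbar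
            \<and> (detectable F Yu wbar \<longrightarrow> asym_stable F wbar)
            \<and> (radially_unbounded HH \<longrightarrow>
                 glob_stable F wbar \<and> (detectable F Yu wbar \<longrightarrow> glob_asym_stable F wbar))"
proof -
  define F where "F = closed_loop_w Jaa Jau Juu Raa Rau Ruu Gd da du Ki H"
  define HH where "HH = (\<lambda>x::(real^'m) \<times> (real^'s). H x + fst x \<bullet> du)"
  define wcbar where "wcbar = matrix_inv Ki *v (da + du)"
  define wbar where "wbar = (fst xbar, snd xbar, wcbar)"
  define Yu where "Yu = (\<lambda>w::(real^'m) \<times> (real^'s) \<times> (real^'m).
                     grad_a HH (fst w, fst (snd w)) + Ki *v (snd (snd w) - wcbar))"
  define V where "V = (\<lambda>w::(real^'m) \<times> (real^'s) \<times> (real^'m). H (fst w, fst (snd w)) + fst w \<bullet> du - HH xbar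
            + (1/2) * ((snd (snd w) - wcbar) \<bullet> (Ki *v (snd (snd w) - wcbar))))"
  define DV where "DV = (\<lambda>w::(real^'m) \<times> (real^'s) \<times> (real^'m). (grad_a H (fst w, fst (snd w)) + du, grad_u H (fst w, fst (snd w)),
              Ki *v (snd (snd w) - wcbar)))"
  define Yf where "Yf = (\<lambda>w::(real^'m) \<times> (real^'s) \<times> (real^'m). grad_a H (fst w, fst (snd w)) + du + Ki *v (snd (snd w) - wcbar))"
  have Kinv: "Ki *v wcbar = da + du" unfolding wcbar_def by (rule Ki_inv[OF Ki_pd])
  have hH: "\<And>z. (H has_derivative (\<lambda>h. h \<bullet> grad H z)) (at z)"
    using grad_works(3)[OF smooth_diff[OF H_smooth]] by blast
  have Vd: "\<And>w. (V has_derivative (\<lambda>h. DV w \<bullet> h)) (at w)"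
    unfolding V_def DV_def by (rule Vd_lemma[OF hH Ki_sym])
  have gHH: "grad HH z = grad H z + (du, 0)" for z
  proof (rule grad_eq)
    have "(HH has_derivative (\<lambda>h. h \<bullet> grad H z + fst h \<bullet> du)) (at z)"
      unfolding HH_def
      by (intro has_derivative_add hH bounded_linear.has_derivative[OF bounded_linear_inner_left has_derivative_fst[OF has_derivative_ident]])
    moreover have "(\<lambda>h. h \<bullet> grad H z + fst h \<bullet> du) = (\<lambda>h. h \<bullet> (grad H z + (du, 0)))"
      by (auto simp: inner_add_right inner_Pair_0)
    ultimately show "GDERIV HH z :> grad H z + (du, 0)" unfolding gderiv_def by simp
  qed
  have gaHH: "grad_a HH z = grad_a H z + du" for z unfolding grad_a_def gHH by simp
  have YuYf: "Yu w = Yf w" for w unfolding Yu_def Yf_def gaHH by simp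
  have Fw: "F w = (let x = (fst w, fst (snd w)); ga = grad_a H x; gu = grad_u H x; Kw = Ki *v snd (snd w);
       u = (- Jaa x + Raa x + Jc1 (Gd x) - Rc1 (Gd x)) *v ga + (Jc1 (Gd x) - Rc1 (Gd x)) *v Kw + 2 *\<^sub>R (Rau x *v gu);
       a = (Jaa x - Raa x) *v ga + (Jau x - Rau x) *v gu + u - Gd x *v da;
       b = (- transpose (Jau x) - transpose (Rau x)) *v ga + (Juu x - Ruu x) *v gu - transpose (Jau x + Rau x) *v du
     in (a, b, a - (Jau x + Rau x) *v gu))" for w
    unfolding F_def closed_loop_w_def plant_def ctrl_def ctrl_dyn_def Let_def by simp
  have Wform: "DV w \<bullet> F w = Yf w \<bullet> (Gd (fst w, fst (snd w)) *v Yf w)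
        - grad_u H (fst w, fst (snd w)) \<bullet> (Ruu (fst w, fst (snd w)) *v grad_u H (fst w, fst (snd w)))" for w
  proof -
    define x where "x = (fst w, fst (snd w))"
    have q: "Ki *v (snd (snd w) - wcbar) = Ki *v snd (snd w) - (da + du)"
      by (simp add: matrix_vector_mult_diff_distrib Kinv)
    have Y: "Yf w = grad_a H x + Ki *v snd (snd w) - da"
      unfolding Yf_def q x_def by (simp add: algebra_simps)
    show ?thesis
      unfolding Fw Let_def DV_def inner_Pair q x_def[symmetric] Y
      using alg(4)[OF J_skew(2)[rule_format, of x], where Jaa="Jaa x" and Raa="Raa x" and G="Gd x"
          and Jau="Jau x" and Rau="Rau x" and Ruu="Ruu x" and ga="grad_a H x" and du=du and da=da
          and Kw="Ki *v snd (snd w)" and gu="grad_u H x"]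
      by (simp add: add.assoc)
  qed
  have psdR: "vu \<bullet> (Ruu z *v vu) \<ge> 0" for z vu
    using R_psd[rule_format, of z, unfolded block_psd_def, rule_format, of 0 vu] by simp
  have negG: "Y \<bullet> (Gd z *v Y) \<le> 0" for z Y
    using Gd_neg[rule_format, of z] unfolding neg_def_def by (cases "Y = 0") (auto intro: less_imp_le)
  have Wn: "\<And>w. DV w \<bullet> F w \<le> 0"
    unfolding Wform using negG psdR by (smt (verit))
  have WY: "\<And>w. DV w \<bullet> F w = 0 \<Longrightarrow> Yu w = 0"
  proof -
    fix w assume "DV w \<bullet> F w = 0"
    then have "Yf w \<bullet> (Gd (fst w, fst (snd w)) *v Yf w) = 0"
      unfolding Wform using negG psdR by (smt (verit))
    then have "Yf w = 0" using Gd_neg[rule_format, of "(fst w, fst (snd w))"] unfolding neg_def_def by force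
    then show "Yu w = 0" by (simp add: YuYf)
  qed
  have cga0: "continuous_on UNIV (grad_a H)"
    unfolding grad_a_def[abs_def] by (intro continuous_on_fst grad_cont[OF H_smooth])
  have cgu0: "continuous_on UNIV (grad_u H)"
    unfolding grad_u_def[abs_def] by (intro continuous_on_snd grad_cont[OF H_smooth])
  note cs = cont_x[OF smooth_cont[OF smooth_J(1)]] cont_x[OF smooth_cont[OF smooth_J(2)]]
    cont_x[OF smooth_cont[OF smooth_J(3)]] cont_x[OF smooth_cont[OF smooth_R(1)]]
    cont_x[OF smooth_cont[OF smooth_R(2)]] cont_x[OF smooth_cont[OF smooth_R(3)]]
    cont_x[OF smooth_cont[OF smooth_Gd]] cont_x[OF cga0] cont_x[OF cgu0]
  have Fc: "continuous_on UNIV F"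
    unfolding F_def closed_loop_w_def[abs_def] plant_def ctrl_def ctrl_dyn_def Let_def Jc1_def Rc1_def
    by (intro continuous_intros cont_mv cont_transpose cs)
  have dHH: "(HH has_derivative (\<lambda>h. h \<bullet> (grad H z + (du, 0)))) (at z)" for z
  proof -
    have "(HH has_derivative (\<lambda>h. h \<bullet> grad H z + fst h \<bullet> du)) (at z)"
      unfolding HH_def
      by (intro has_derivative_add hH bounded_linear.has_derivative[OF bounded_linear_inner_left has_derivative_fst[OF has_derivative_ident]])
    moreover have "(\<lambda>h. h \<bullet> grad H z + fst h \<bullet> du) = (\<lambda>h. h \<bullet> (grad H z + (du, 0)))"
      by (auto simp: inner_add_right inner_Pair_0)
    ultimately show ?thesis by simp
  qed
  have "(\<lambda>h. h \<bullet> (grad H xbar + (du, 0))) = (\<lambda>v. 0)"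
    by (rule differential_zero_maxmin[OF _ open_UNIV dHH]) (use xbar_min in \<open>auto simp: HH_def\<close>)
  then have "(grad H xbar + (du, 0)) \<bullet> (grad H xbar + (du, 0)) = 0" by meson
  then have g0: "grad H xbar + (du, 0) = 0" by simp
  have "fst (grad H xbar) + du = 0" using arg_cong[OF g0, of fst] by simp
  then have ga: "grad_a H xbar = - du" unfolding grad_a_def by (simp add: eq_neg_iff_add_eq_0)
  have gu: "grad_u H xbar = 0" using arg_cong[OF g0, of snd] unfolding grad_u_def by simp
  have xw: "(fst wbar, fst (snd wbar)) = xbar" by (simp add: wbar_def)
  have Kw: "Ki *v snd (snd wbar) = da + du" using Kinv by (simp add: wbar_def)
  have Fe: "F wbar = 0"
    unfolding Fw Let_def xw Kw ga gu
    using alg(1)[OF J_skew(2)[rule_format, of xbar], where Jaa="Jaa xbar" and Raa="Raa xbar" and G="Gd xbar"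
          and Jau="Jau xbar" and Rau="Rau xbar" and ga="- du" and da=da
          and Kw="da + du" and gu="0"]
      alg(3)[OF J_skew(2)[rule_format, of xbar], where
          Jau="Jau xbar" and Rau="Rau xbar" and Ruu="Ruu xbar" and ga="- du" and du=du 
          and gu="0"]
    by (simp add: zero_prod_def)
  have quad: "v \<bullet> (Ki *v v) \<ge> 0" for v
    using Ki_pd unfolding pos_def_def by (cases "v = 0") (auto intro: less_imp_le)
  have quadpos: "v \<noteq> 0 \<Longrightarrow> v \<bullet> (Ki *v v) > 0" for v
    using Ki_pd unfolding pos_def_def by blast
  have Vform: "V w = (HH (fst w, fst (snd w)) - HH xbar) + (1/2) * ((snd (snd w) - wcbar) \<bullet> (Ki *v (snd (snd w) - wcbar)))" for w
    unfolding V_def HH_def by simp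
  have HHmin: "HH (fst w, fst (snd w)) - HH xbar \<ge> 0" for w
    using xbar_min unfolding HH_def by (simp add: algebra_simps)
  have V0: "V wbar = 0" unfolding Vform by (simp add: wbar_def)
  have Vnn: "\<And>w. V w \<ge> 0"
  proof -
    fix w
    show "V w \<ge> 0" unfolding Vform using HHmin[of w] quad[of "snd (snd w) - wcbar"] by simp
  qed
  have Vpos: "\<exists>r>0. \<forall>x. x \<noteq> wbar \<longrightarrow> dist x wbar < r \<longrightarrow> V x > 0"
  proof -
    obtain r where r: "r > 0" "\<And>x. x \<noteq> xbar \<Longrightarrow> dist x xbar < r \<Longrightarrow> HH xbar < HH x"
      using xbar_isol unfolding HH_def by blast
    show ?thesis
    proof (intro exI[of _ r] conjI allI impI r(1))
      fix w assume w: "w \<noteq> wbar" "dist w wbar < r"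
      have "dist (fst w, fst (snd w)) xbar < r"
        using dist_triple[of w wbar] w(2) xw by simp
      show "V w > 0"
      proof (cases "(fst w, fst (snd w)) = xbar")
        case False
        then have "HH (fst w, fst (snd w)) - HH xbar > 0" using r(2) \<open>dist (fst w, fst (snd w)) xbar < r\<close> by simp
        then show ?thesis unfolding Vform using quad by (simp add: add_pos_nonneg)
      next
        case True
        have "snd (snd w) \<noteq> wcbar"
        proof
          assume "snd (snd w) = wcbar"
          moreover have "fst w = fst xbar" "fst (snd w) = snd xbar"
            using arg_cong[OF True, of fst] arg_cong[OF True, of snd] by simp_all
          ultimately have "w = wbar" unfolding wbar_def by (simp add: prod_eq_iff)
          then show False using w(1) by simp
        qed
        then have "(snd (snd w) - wcbar) \<bullet> (Ki *v (snd (snd w) - wcbar)) > 0" by (intro quadpos) simp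
        then show ?thesis unfolding Vform True by simp
      qed
    qed
  qed
  have st: "lyap_stable F wbar" by (rule lyap[OF Fe Vd Wn V0 Vpos])
  have SB: "\<exists>R. \<forall>w. V w \<le> M \<longrightarrow> norm w \<le> R" if ru: "radially_unbounded HH" for M
  proof -
    obtain l where l: "l > 0" "\<And>v. v \<bullet> (Ki *v v) \<ge> l * (norm v)^2" using pd_lower[OF Ki_pd] by blast
    have "\<forall>\<^sub>F x in at_infinity. M + HH xbar + 1 \<le> HH x"
      using ru unfolding radially_unbounded_def filterlim_at_top by blast
    then obtain b where b: "\<And>x. norm x \<ge> b \<Longrightarrow> M + HH xbar + 1 \<le> HH x"
      unfolding eventually_at_infinity by blast
    show ?thesis
    proof (intro exI[of _ "b + (1 + 2 * \<bar>M\<bar> / l) + norm wcbar"] allI impI)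
      fix w assume VM: "V w \<le> M"
      define p where "p = snd (snd w) - wcbar"
      have Vf: "V w = (HH (fst w, fst (snd w)) - HH xbar) + (1/2) * (p \<bullet> (Ki *v p))"
        unfolding Vform p_def ..
      have h0: "HH (fst w, fst (snd w)) - HH xbar \<ge> 0" by (rule HHmin)
      have q0: "p \<bullet> (Ki *v p) \<ge> 0" by (rule quad)
      have nX: "norm (fst w, fst (snd w)) \<le> b"
      proof (rule ccontr)
        assume "\<not> norm (fst w, fst (snd w)) \<le> b"
        then have "M + HH xbar + 1 \<le> HH (fst w, fst (snd w))" by (intro b) simp
        then show False using VM Vf q0 by simp
      qed
      have "l * (norm p)^2 \<le> 2 * \<bar>M\<bar>" using l(2)[of p] VM Vf h0 by simp
      then have np2: "(norm p)^2 \<le> 2 * \<bar>M\<bar> / l" using l(1) by (simp add: field_simps mult.commute)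
      have "norm p \<le> 1 + (norm p)^2"
      proof (cases "norm p \<le> 1")
        case True then show ?thesis by (simp add: add_increasing2)
      next
        case False then have "norm p \<le> norm p * norm p" by (simp add: mult_le_cancel_left1)
        then show ?thesis by (simp add: power2_eq_square)
      qed
      then have np: "norm p \<le> 1 + 2 * \<bar>M\<bar> / l" using np2 by simp
      have "norm (snd (snd w)) \<le> norm p + norm wcbar"
        unfolding p_def using norm_triangle_ineq4[of "snd (snd w)" wcbar] norm_triangle_sub[of "snd (snd w)" wcbar] by simp
      then show "norm w \<le> b + (1 + 2 * \<bar>M\<bar> / l) + norm wcbar"
        using norm_triple[of w] nX np by simp
    qed
  qed
  have main: "lyap_stable F wbar \<and> (detectable F Yu wbar \<longrightarrow> asym_stable F wbar)
        \<and> (radially_unbounded HH \<longrightarrow> glob_stable F wbar \<and> (detectable F Yu wbar \<longrightarrow> glob_asym_stable F wbar))"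
  proof (intro conjI impI st)
    assume det: "detectable F Yu wbar"
    show "asym_stable F wbar" by (rule asym[OF Fc Vd Wn Vnn WY det st])
  next
    assume ru: "radially_unbounded HH"
    have SB': "\<And>M. \<exists>R. \<forall>w. V w \<le> M \<longrightarrow> norm w \<le> R" using SB[OF ru] by blast
    show "glob_stable F wbar" by (rule glob(1)[OF Fc Vd Wn Vnn st SB'])
    assume det: "detectable F Yu wbar"
    show "glob_asym_stable F wbar" by (rule glob(2)[OF Fc Vd Wn Vnn st SB' WY det])
  qed
  then show ?thesis
    unfolding Let_def F_def HH_def wcbar_def wbar_def Yu_def .
qed

end
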